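(* $\lim_{m\to\infty}\frac{\beta_c(m)}{m/2}=1$.
   Context: Let $(\lambda_i)_{i\ge0}$ be the Thue–Morse sequence: $\lambda_0=0$, $\lambda_{2i}=\lambda_i$, $\lambda_{2i+1}=1-\lambda_i$. For $m\in\mathbb{N}$ and $i\ge1$ set $\lambda_i(m)=k+\lambda_i-\lambda_{i-1}$ if $m=2k$ and $\lambda_i(m)=k+\lambda_i$ if $m=2k+1$. $\beta_c(m)$ is the unique solution $\beta>1$ of $\sum_{i=1}^\infty\lambda_i(m)\beta^{-i}=1$. *)

theory Defs
  imports "HOL-Analysis.Analysis"
begin

fun thue_morse :: "nat \<Rightarrow> nat" where
  "thue_morse n = (if n = 0 then 0
     else if even n then thue_morse (n div 2) else 1 - thue_morse (n div 2))"

definition lam :: "nat \<Rightarrow> nat \<Rightarrow> real" where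
  "lam m i = (if even m
      then real (m div 2) + real (thue_morse i) - real (thue_morse (i - 1))
      else real (m div 2) + real (thue_morse i))"

definition beta_c :: "nat \<Rightarrow> real" where
  "beta_c m = (THE \<beta>. \<beta> > 1 \<and> (\<lambda>i. lam m (i + 1) / \<beta> ^ (i + 1)) sums 1)"

end

theory Submission
  imports Defs
begin

declare thue_morse.simps[simp del]

lemma tm_le1: "thue_morse n \<le> 1"
proof (induction n rule: less_induct)
  case (less n)
  show ?case
    using less[of "n div 2"] by (subst thue_morse.simps) auto
qed

lemma lam_lo: "real (m div 2) - 1 \<le> lam m i"
  using tm_le1[of i] tm_le1[of "i-1"] by (auto simp: lam_def)

lemma lam_hi: "lam m i \<le> real (m div 2) + 1"
  using tm_le1[of i] tm_le1[of "i-1"] by (auto simp: lam_def)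

lemma geo:
  fixes \<beta> c :: real
  assumes "\<beta> > 1"
  shows "(\<lambda>i. c / \<beta> ^ (i + 1)) sums (c / (\<beta> - 1))"
proof -
  have "(\<lambda>i. (1/\<beta>) ^ i) sums (1 / (1 - 1/\<beta>))"
    by (rule geometric_sums) (use assms in auto)
  then have "(\<lambda>i. (c/\<beta>) * (1/\<beta>) ^ i) sums ((c/\<beta>) * (1 / (1 - 1/\<beta>)))"
    by (rule sums_mult)
  moreover have "(c/\<beta>) * (1 / (1 - 1/\<beta>)) = c / (\<beta> - 1)"
    using assms by (simp add: field_simps)
  moreover have "(\<lambda>i. (c/\<beta>) * (1/\<beta>) ^ i) = (\<lambda>i. c / \<beta> ^ (i + 1))"
    by (rule ext) (simp add: power_one_over)
  ultimately show ?thesis by metis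
qed

lemma sol_bounds:
  assumes k: "m div 2 \<ge> 2" and b: "\<beta> > 1"
    and s: "(\<lambda>i. lam m (i + 1) / \<beta> ^ (i + 1)) sums 1"
  shows "real (m div 2) \<le> \<beta> \<and> \<beta> \<le> real (m div 2) + 2"
proof -
  let ?k = "real (m div 2)"
  have pos: "\<And>i. 0 < \<beta> ^ (i+1)" using b by simp
  have "(?k - 1) / (\<beta> - 1) \<le> 1"
    by (rule sums_le[OF _ geo[OF b] s]) (use b in \<open>auto intro!: divide_right_mono lam_lo\<close>)
  then have l: "?k \<le> \<beta>" using b by (simp add: divide_le_eq)
  have "1 \<le> (?k + 1) / (\<beta> - 1)"
    by (rule sums_le[OF _ s geo[OF b]]) (use b in \<open>auto intro!: divide_right_mono lam_hi\<close>)
  then have "\<beta> \<le> ?k + 2" using b by (simp add: le_divide_eq)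
  with l show ?thesis by simp
qed

lemma sol_unique:
  assumes k: "m div 2 \<ge> 2" and b1: "\<beta>1 > 1" and b2: "\<beta>2 > 1" and lt: "\<beta>1 < \<beta>2"
    and s1: "(\<lambda>i. lam m (i + 1) / \<beta>1 ^ (i + 1)) sums 1"
    and s2: "(\<lambda>i. lam m (i + 1) / \<beta>2 ^ (i + 1)) sums 1"
  shows False
proof -
  have lp: "lam m i > 0" for i
  proof -
    have "real (m div 2) \<ge> 2" using k by simp
    with lam_lo[of m i] show ?thesis by linarith
  qed
  have "0 < (\<Sum>i. lam m (i + 1) / \<beta>1 ^ (i + 1) - lam m (i + 1) / \<beta>2 ^ (i + 1))"
  proof (rule suminf_pos)
    show "summable (\<lambda>i. lam m (i + 1) / \<beta>1 ^ (i + 1) - lam m (i + 1) / \<beta>2 ^ (i + 1))"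
      using s1 s2 by (intro summable_diff) (auto simp: sums_iff)
    fix i
    have "\<beta>1 ^ (i+1) < \<beta>2 ^ (i+1)"
      using b1 lt by (intro power_strict_mono) auto
    then show "0 < lam m (i + 1) / \<beta>1 ^ (i + 1) - lam m (i + 1) / \<beta>2 ^ (i + 1)"
    proof -
      have "lam m (i + 1) / \<beta>2 ^ (i + 1) < lam m (i + 1) / \<beta>1 ^ (i + 1)"
        by (rule divide_strict_left_mono) (use lp[of "i+1"] b1 b2 \<open>\<beta>1 ^ (i+1) < \<beta>2 ^ (i+1)\<close> in auto)
      then show ?thesis by linarith
    qed
  qed
  also have "\<dots> = 1 - 1"
    using sums_diff[OF s1 s2] by (simp add: sums_iff)
  finally show False by simp
qed

lemma sol_exists:
  assumes k: "m div 2 \<ge> 2"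
  shows "\<exists>\<beta>. \<beta> > 1 \<and> (\<lambda>i. lam m (i + 1) / \<beta> ^ (i + 1)) sums 1"
proof -
  let ?k = "real (m div 2)"
  define c where "c n = (if n = 0 then 0 else lam m n)" for n
  define g where "g x = (\<Sum>n. c n * x ^ n)" for x :: real
  have cb: "\<bar>c n\<bar> \<le> ?k + 1" for n
    using lam_lo[of m n] lam_hi[of m n] by (auto simp: c_def)
  have summ: "summable (\<lambda>n. c n * x ^ n)" if "\<bar>x\<bar> < 1" for x :: real
  proof (rule summable_comparison_test[of _ "\<lambda>n. (?k+1) * \<bar>x\<bar> ^ n"])
    show "\<exists>N. \<forall>n\<ge>N. norm (c n * x ^ n) \<le> (?k + 1) * \<bar>x\<bar> ^ n"
      using cb by (auto simp: abs_mult power_abs intro!: mult_right_mono)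
    show "summable (\<lambda>n. (?k + 1) * \<bar>x\<bar> ^ n)"
      using that by (intro summable_mult summable_geometric) simp
  qed
  have gs: "(\<lambda>i. lam m (i+1) * x ^ (i+1)) sums g x" if "\<bar>x\<bar> < 1" for x :: real
  proof -
    have "(\<lambda>n. c n * x ^ n) sums g x" using summ[OF that] by (simp add: g_def summable_sums)
    then have "(\<lambda>n. c (Suc n) * x ^ (Suc n)) sums g x"
      using sums_Suc_iff[of "\<lambda>n. c n * x ^ n"] by (simp add: c_def)
    then show ?thesis by (simp add: c_def)
  qed
  have cont: "continuous_on {1/(?k+3) .. 1/?k} g"
  proof (intro continuous_at_imp_continuous_on ballI)
    fix x assume x: "x \<in> {1/(?k+3) .. 1/?k}"
    have kk: "real (m div 2) \<ge> 2" using k by simp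
    have xa: "1/(?k+3) \<le> x" "x \<le> 1/?k" using x by auto
    have "0 < 1/(?k+3)" by simp
    then have "0 < x" using xa by linarith
    moreover have "1/?k \<le> 1/2" using kk by (simp add: field_simps)
    then have "x \<le> 1/2" using xa by linarith
    then have "x < 3/4" by simp
    ultimately have "norm x < norm (3/4::real)" by simp
    moreover have "summable (\<lambda>n. c n * (3/4::real) ^ n)" by (rule summ) simp
    ultimately show "isCont g x" unfolding g_def by (intro isCont_powser)
  qed
  have gbounds: "(?k - 1) * x / (1 - x) \<le> g x \<and> g x \<le> (?k + 1) * x / (1 - x)"
    if "0 < x" "x < 1" for x :: real
  proof -
    define \<beta> where "\<beta> = 1 / x"
    have b: "\<beta> > 1" using that by (simp add: \<beta>_def)
    have e: "\<And>i. lam m (i+1) * x ^ (i+1) = lam m (i+1) / \<beta> ^ (i+1)"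
      using that by (simp add: \<beta>_def power_one_over)
    have s: "(\<lambda>i. lam m (i+1) / \<beta> ^ (i+1)) sums g x" using gs[of x] that e by simp
    have pos: "\<And>i. 0 < \<beta> ^ (i+1)" using b by simp
    have "(?k - 1) / (\<beta> - 1) \<le> g x"
      by (rule sums_le[OF _ geo[OF b] s]) (use b in \<open>auto intro!: divide_right_mono lam_lo\<close>)
    moreover have "g x \<le> (?k + 1) / (\<beta> - 1)"
      by (rule sums_le[OF _ s geo[OF b]]) (use b in \<open>auto intro!: divide_right_mono lam_hi\<close>)
    moreover have "\<And>c. c / (\<beta> - 1) = c * x / (1 - x)" using that
      by (simp add: \<beta>_def field_simps)
    ultimately show ?thesis by simp
  qed
  have kpos: "?k \<ge> 2" using k by simp
  have ga: "g (1/(?k+3)) \<le> 1"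
  proof -
    have "g (1/(?k+3)) \<le> (?k + 1) * (1/(?k+3)) / (1 - 1/(?k+3))"
      using gbounds[of "1/(?k+3)"] kpos by simp
    also have "\<dots> = (?k+1)/(?k+2)"
    proof -
      have a: "?k + 3 \<noteq> 0" "?k+2 \<noteq> 0" using kpos by auto
      have "1 - 1/(?k+3) = (?k+2)/(?k+3)" using a by (simp add: field_simps)
      then show ?thesis using a by simp
    qed
    also have "\<dots> \<le> 1" using kpos by simp
    finally show ?thesis .
  qed
  have gb: "1 \<le> g (1/?k)"
  proof -
    have "(?k - 1) * (1/?k) / (1 - 1/?k) \<le> g (1/?k)"
      using gbounds[of "1/?k"] kpos by simp
    moreover have "(?k - 1) * (1/?k) / (1 - 1/?k) = 1"
    proof -
      have a: "?k \<noteq> 0" "?k - 1 \<noteq> 0" using kpos by auto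
      have "1 - 1/?k = (?k - 1)/?k" using a by (simp add: field_simps)
      then show ?thesis using a by simp
    qed
    ultimately show ?thesis by linarith
  qed
  have "1/(?k+3) \<le> 1/?k" using kpos by (simp add: frac_le)
  from IVT'[of g "1/(?k+3)" 1 "1/?k", OF ga gb this cont]
  obtain x where x: "1/(?k+3) \<le> x" "x \<le> 1/?k" "g x = 1" by blast
  have "0 < 1/(?k+3)" by simp
  then have x0: "0 < x" using x(1) by linarith
  have "1/?k \<le> 1/2" using kpos by (simp add: field_simps)
  then have x1: "x < 1" using x(2) by linarith
  define \<beta> where "\<beta> = 1 / x"
  have b: "\<beta> > 1" using x0 x1 by (simp add: \<beta>_def)
  have e: "\<And>i. lam m (i+1) * x ^ (i+1) = lam m (i+1) / \<beta> ^ (i+1)"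
    using x0 by (simp add: \<beta>_def power_one_over)
  have "(\<lambda>i. lam m (i+1) / \<beta> ^ (i+1)) sums 1" using gs[of x] x0 x1 x(3) e by simp
  with b show ?thesis by blast
qed

lemma beta_c_bounds:
  assumes k: "m div 2 \<ge> 2"
  shows "real (m div 2) \<le> beta_c m \<and> beta_c m \<le> real (m div 2) + 2"
proof -
  let ?P = "\<lambda>\<beta>. \<beta> > 1 \<and> (\<lambda>i. lam m (i + 1) / \<beta> ^ (i + 1)) sums 1"
  obtain \<beta> where b: "?P \<beta>" using sol_exists[OF k] by blast
  have "?P (THE \<beta>. ?P \<beta>)"
  proof (rule theI[of ?P \<beta>, OF b])
    fix y assume y: "?P y"
    show "y = \<beta>"
    proof (rule ccontr)
      assume "y \<noteq> \<beta>"
      then consider "y < \<beta>" | "\<beta> < y" by linarith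
      then show False
        using sol_unique[OF k] y b by metis
    qed
  qed
  then have "?P (beta_c m)" by (simp add: beta_c_def)
  then show ?thesis using sol_bounds[OF k] by blast
qed

theorem lemma4p9:
  shows "(\<lambda>m. beta_c m / (real m / 2)) \<longlonglongrightarrow> 1"
proof (rule tendsto_sandwich[of "\<lambda>m. 1 - 1 / real m" _ _ "\<lambda>m. 1 + 4 / real m"])
  show "\<forall>\<^sub>F m in sequentially. 1 - 1 / real m \<le> beta_c m / (real m / 2)"
  proof (rule eventually_sequentiallyI[of 4])
    fix m :: nat assume m: "4 \<le> m"
    have k: "m div 2 \<ge> 2" using m by simp
    have "real m - 1 \<le> 2 * real (m div 2)" by linarith
    then have "real m - 1 \<le> 2 * beta_c m" using beta_c_bounds[OF k] by linarith
    then have "(real m - 1) / real m \<le> (2 * beta_c m) / real m"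
      by (rule divide_right_mono) simp
    moreover have "(real m - 1) / real m = 1 - 1 / real m" using m by (simp add: field_simps)
    moreover have "(2 * beta_c m) / real m = beta_c m / (real m / 2)" by simp
    ultimately show "1 - 1 / real m \<le> beta_c m / (real m / 2)" by simp
  qed
  show "\<forall>\<^sub>F m in sequentially. beta_c m / (real m / 2) \<le> 1 + 4 / real m"
  proof (rule eventually_sequentiallyI[of 4])
    fix m :: nat assume m: "4 \<le> m"
    have k: "m div 2 \<ge> 2" using m by simp
    have "2 * real (m div 2) \<le> real m" by linarith
    then have "2 * beta_c m \<le> real m + 4" using beta_c_bounds[OF k] by linarith
    then have "(2 * beta_c m) / real m \<le> (real m + 4) / real m"
      by (rule divide_right_mono) simp
    moreover have "(real m + 4) / real m = 1 + 4 / real m" using m by (simp add: field_simps)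
    moreover have "(2 * beta_c m) / real m = beta_c m / (real m / 2)" by simp
    ultimately show "beta_c m / (real m / 2) \<le> 1 + 4 / real m" by simp
  qed
  show "(\<lambda>m. 1 - 1 / real m) \<longlonglongrightarrow> 1"
    using tendsto_diff[OF tendsto_const lim_inverse_n'] by simp
  have "(\<lambda>m. 1 + 4 * (1 / real m)) \<longlonglongrightarrow> 1 + 4 * 0"
    by (intro tendsto_intros lim_inverse_n')
  then show "(\<lambda>m. 1 + 4 / real m) \<longlonglongrightarrow> 1" by simp
qed

end
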